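(* Let $N,k$ be positive integers with $k<N/2$ (and $k\ge 6$), and for a real $c$ with $N/c$ a positive integer define $$\gamma(N,k,c)=\sum_{m=0}^{\lfloor k/2\rfloor}\binom{N/c}{m}^2\binom{(1-2/c)N}{k-2m}.$$ Then there is an absolute constant $C$ such that $\gamma(N,k,c)/\binom{N}{k}\le C\sqrt{c/k}$ for every such $c$ with $2\le c\le k/3$.
   Context: $\gamma(N,k,c)/\binom{N}{k}$ equals the probability that a balance with $N/c$ coins on each pan is balanced, when the $N/c+N/c$ placed coins are chosen among $N$ coins of which $k$ uniformly random ones are false (all false coins have equal weight). *)

theory Defs
  imports Complex_Main
begin

text \<open>gamma(N,k,c) = sum_{m=0}^{floor(k/2)} binom(N/c, m)^2 binom((1-2/c)N, k-2m).
  Meaningful when N/c is a positive integer n; then (1-2/c)N = N - 2n (a natural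
  number when c \<ge> 2).\<close>
definition gamma :: "nat \<Rightarrow> nat \<Rightarrow> real \<Rightarrow> real" where
  "gamma N k c =
     (let n = nat \<lfloor>real N / c\<rfloor> in
      (\<Sum>m = 0..k div 2. real (n choose m) ^ 2 * real ((N - 2 * n) choose (k - 2 * m))))"

end

theory Submission
  imports Defs
begin

lemma cratio: "(real m + 1) * real ((2*Suc m) choose Suc m) = 2*(2*real m+1) * real ((2*m) choose m)"
proof -
  have a: "Suc m * (Suc (2*m) choose Suc m) = Suc (2*m) * ((2*m) choose m)"
    using Suc_times_binomial[of m "2*m"] by simp
  have b: "Suc m * (Suc (Suc (2*m)) choose Suc m) = Suc (Suc (2*m)) * ((Suc (2*m)) choose m)"
    using Suc_times_binomial[of m "Suc (2*m)"] by simp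
  have c: "(Suc (2*m)) choose m = (Suc (2*m)) choose (Suc m)"
    using binomial_symmetric[of m "Suc (2*m)"] by simp
  have e: "2*Suc m = Suc (Suc (2*m))" by simp
  define Q where "Q = real (Suc (Suc (2*m)) choose Suc m)"
  define S where "S = real (Suc (2*m) choose Suc m)"
  define T where "T = real ((2*m) choose m)"
  have a': "(real m + 1) * S = (2*real m+1) * T"
    unfolding S_def T_def using arg_cong[OF a, of real] by (simp only: of_nat_mult of_nat_Suc) (simp del: binomial_Suc_Suc add: algebra_simps)
  have b': "(real m + 1) * Q = (2*real m+2) * S"
    unfolding S_def Q_def using arg_cong[OF b, of real] c by (simp only: of_nat_mult of_nat_Suc) (simp del: binomial_Suc_Suc add: algebra_simps)
  have "(real m + 1) * ((real m + 1) * Q) = (real m + 1) * ((2*real m+2) * S)" using b' by simp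
  also have "\<dots> = (2*real m+2) * ((real m + 1) * S)" by (simp only: mult_ac)
  also have "\<dots> = (2*real m+2) * ((2*real m+1) * T)" using a' by simp
  also have "\<dots> = (real m + 1) * (2*(2*real m+1) * T)" by (simp add: algebra_simps)
  finally have "(real m + 1) * ((real m + 1) * Q) = (real m + 1) * (2*(2*real m+1) * T)" .
  then have "(real m + 1) * Q = 2*(2*real m+1) * T" by (simp only: mult_cancel_left) simp
  then show ?thesis unfolding Q_def T_def e .
qed
lemma cb_upper: "real ((2*m) choose m)^2 * (3*real m+1) \<le> 16^m"
proof (induction m)
  case 0 then show ?case by simp
next
  case (Suc m)
  define X where "X = real ((2*m) choose m)"
  define Y where "Y = real ((2*Suc m) choose Suc m)"
  have r: "(real m + 1) * Y = 2*(2*real m+1) * X" unfolding X_def Y_def by (rule cratio)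
  have r2: "(real m+1)^2 * Y^2 = 4*(2*real m+1)^2*X^2"
  proof -
    have "((real m+1)*Y)^2 = (2*(2*real m+1)*X)^2" using r by simp
    thus ?thesis by (simp only: power_mult_distrib) simp
  qed
  have p: "(2*real m+1)^2*(3*real m+4) \<le> 4*(real m+1)^2*(3*real m+1)"
    by (simp add: power2_eq_square algebra_simps)
  have IH: "X^2*(3*real m+1) \<le> 16^m" using Suc.IH X_def by simp
  have "(real m + 1)^2 * (Y^2 * (3*real m+4)) = ((real m + 1)^2 * Y^2) * (3*real m+4)"
    by (simp only: mult_ac)
  also have "\<dots> = 4*((2*real m+1)^2*(3*real m+4)) * X^2" unfolding r2 by (simp only: mult_ac)
  also have "\<dots> \<le> 4*(4*(real m+1)^2*(3*real m+1)) * X^2"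
    by (intro mult_right_mono mult_left_mono p) auto
  also have "\<dots> = 16*(real m+1)^2 * (X^2*(3*real m+1))" by (simp add: algebra_simps)
  also have "\<dots> \<le> 16*(real m+1)^2 * 16^m"
    by (intro mult_left_mono IH) auto
  also have "\<dots> = (real m + 1)^2 * 16^Suc m" by simp
  finally have "(real m + 1)^2 * (Y^2 * (3*real m+4)) \<le> (real m + 1)^2 * 16^Suc m" .
  then have "Y^2 * (3*real m+4) \<le> 16^Suc m"
    by (rule mult_left_le_imp_le) auto
  moreover have "3*real (Suc m)+1 = 3*real m+4" by simp
  ultimately show ?case unfolding Y_def by (simp add: algebra_simps)
qed

lemma cb_lower: "n \<ge> 1 \<Longrightarrow> 16^n \<le> 4*real n * real ((2*n) choose n)^2"
proof (induction n rule: dec_induct)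
  case base then show ?case by simp
next
  case (step m)
  define X where "X = real ((2*m) choose m)"
  define Y where "Y = real ((2*Suc m) choose Suc m)"
  have r: "(real m + 1) * Y = 2*(2*real m+1) * X" unfolding X_def Y_def by (rule cratio)
  have r2: "(real m+1)^2 * Y^2 = 4*(2*real m+1)^2*X^2"
  proof -
    have "((real m+1)*Y)^2 = (2*(2*real m+1)*X)^2" using r by simp
    thus ?thesis by (simp only: power_mult_distrib) simp
  qed
  have IH: "16^m \<le> 4*real m*X^2" using step.IH X_def by simp
  have p: "4*real m*(real m + 1) \<le> (2*real m+1)^2"
    by (simp add: power2_eq_square algebra_simps)
  have "(real m + 1) * 16^Suc m = 16*(real m+1) * 16^m" by simp
  also have "\<dots> \<le> 16*(real m+1) * (4*real m*X^2)" by (intro mult_left_mono IH) auto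
  also have "\<dots> = 16*(4*real m*(real m + 1))*X^2" by (simp add: algebra_simps)
  also have "\<dots> \<le> 16*(2*real m+1)^2*X^2" by (intro mult_right_mono mult_left_mono p) auto
  also have "\<dots> = 4 * (4*(2*real m+1)^2*X^2)" by (simp only: mult_ac)
  also have "\<dots> = 4 * ((real m+1)^2 * Y^2)" unfolding r2 ..
  also have "\<dots> = (real m + 1) * (4 * (real m + 1) * Y^2)" by (simp add: power2_eq_square)
  finally have "16^Suc m \<le> 4 * (real m + 1) * Y^2"
    by (rule mult_left_le_imp_le) auto
  moreover have "real (Suc m) = real m + 1" by simp
  ultimately show ?case unfolding Y_def by (simp add: algebra_simps)
qed


lemma binid: "real ((m+j) choose m)^2 * real ((2*(m+j)) choose (m+j)) =
   real ((2*m) choose m) * real ((2*j) choose j) * real ((2*(m+j)) choose (2*m))"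
proof -
  have e1: "real ((m+j) choose m) = fact (m+j) / (fact m * fact j)"
    using binomial_fact[of m "m+j", where 'a=real] by simp
  have e2: "real ((2*(m+j)) choose (m+j)) = fact (2*(m+j)) / (fact (m+j) * fact (m+j))"
    using binomial_fact[of "m+j" "2*(m+j)", where 'a=real] by (simp add: mult_2)
  have e3: "real ((2*m) choose m) = fact (2*m) / (fact m * fact m)"
    using binomial_fact[of m "2*m", where 'a=real] by (simp add: mult_2)
  have e4: "real ((2*j) choose j) = fact (2*j) / (fact j * fact j)"
    using binomial_fact[of j "2*j", where 'a=real] by (simp add: mult_2)
  have e5: "real ((2*(m+j)) choose (2*m)) = fact (2*(m+j)) / (fact (2*m) * fact (2*j))"
    using binomial_fact[of "2*m" "2*(m+j)", where 'a=real] by simp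
  show ?thesis unfolding e1 e2 e3 e4 e5 by (simp add: field_simps power2_eq_square)
qed

lemma rho_bound:
  assumes "m + j \<ge> 1"
  shows "real ((m+j) choose m)^2 \<le> real ((2*(m+j)) choose (2*m)) * sqrt (4/(real m+1) + 4/(real j+1))"
proof -
  define n where "n = m + j"
  define b where "b = real ((m+j) choose m)"
  define E where "E = real ((2*(m+j)) choose (2*m))"
  define A where "A = real ((2*m) choose m)"
  define B where "B = real ((2*j) choose j)"
  define D where "D = real ((2*n) choose n)"
  define q where "q = 4/(real m+1) + 4/(real j+1)"
  have id: "b^2 * D = A * B * E" unfolding b_def D_def A_def B_def E_def n_def by (rule binid)
  have hA: "A^2 * (3*real m+1) \<le> 16^m" unfolding A_def by (rule cb_upper)
  have hB: "B^2 * (3*real j+1) \<le> 16^j" unfolding B_def by (rule cb_upper)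
  have hD: "16^n \<le> 4*real n * D^2" unfolding D_def using assms n_def by (intro cb_lower) simp
  have hAB: "(A^2 * (3*real m+1)) * (B^2 * (3*real j+1)) \<le> 16^m * 16^j"
    using hA hB by (intro mult_mono) auto
  have n16: "(16::real)^n = 16^m * 16^j" unfolding n_def by (simp add: power_add)
  have "b^4 * 16^n * ((3*real m+1)*(3*real j+1)) \<le> b^4 * (4*real n * D^2) * ((3*real m+1)*(3*real j+1))"
    using hD by (intro mult_right_mono mult_left_mono) auto
  also have "\<dots> = 4*real n * (b^2*D)^2 * ((3*real m+1)*(3*real j+1))"
    by (simp add: power2_eq_square power4_eq_xxxx)
  also have "\<dots> = 4*real n * E^2 * ((A^2 * (3*real m+1)) * (B^2 * (3*real j+1)))"
    unfolding id by (simp add: power2_eq_square algebra_simps)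
  also have "\<dots> \<le> 4*real n * E^2 * (16^m * 16^j)"
    using hAB by (intro mult_left_mono) auto
  finally have "16^n * (b^4 * ((3*real m+1)*(3*real j+1))) \<le> 16^n * (4*real n * E^2)"
    unfolding n16 by (simp add: algebra_simps)
  then have h1: "b^4 * ((3*real m+1)*(3*real j+1)) \<le> 4*real n * E^2"
    by (rule mult_left_le_imp_le) auto
  have qe: "q = 4*(real m + real j + 2)/((real m+1)*(real j+1))"
    unfolding q_def by (simp add: field_simps)
  have pp: "(real m+1)*(real j+1) \<le> (3*real m+1)*(3*real j+1)"
    by (intro mult_mono) auto
  have "4*real n \<le> 4*(real m + real j + 2)" unfolding n_def by simp
  also have "\<dots> = q * ((real m+1)*(real j+1))" unfolding qe by simp
  also have "\<dots> \<le> q * ((3*real m+1)*(3*real j+1))"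
    using pp unfolding q_def by (intro mult_left_mono) auto
  finally have h2: "4*real n \<le> q * ((3*real m+1)*(3*real j+1))" .
  have "b^4 * ((3*real m+1)*(3*real j+1)) \<le> (q * E^2) * ((3*real m+1)*(3*real j+1))"
  proof -
    have "4*real n * E^2 \<le> (q * ((3*real m+1)*(3*real j+1))) * E^2"
      by (rule mult_right_mono[OF h2]) simp
    from order_trans[OF h1 this] show ?thesis by (simp only: mult_ac)
  qed
  then have h3: "b^4 \<le> q * E^2" by (rule mult_right_le_imp_le) auto
  have e4: "b^4 = (b^2)^2" by (simp add: power2_eq_square power4_eq_xxxx)
  have "b^2 = sqrt (b^4)"
  proof -
    have "sqrt ((b^2)^2) = \<bar>b^2\<bar>" by (rule real_sqrt_abs)
    then show ?thesis unfolding e4 by simp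
  qed
  also have "\<dots> \<le> sqrt (q * E^2)" using h3 by simp
  also have "\<dots> = E * sqrt q" unfolding E_def by (simp add: real_sqrt_mult)
  finally show ?thesis unfolding b_def E_def q_def .
qed

lemma term_bound0:
  fixes l :: real
  assumes l: "0 < l" and n: "0 < n"
  shows "real (n choose m)^2 \<le> (l/2)*real ((2*n) choose (2*m)) +
     (4/(l*(2*real n+1)))*(real ((2*n+1) choose (2*m+1)) + real ((2*n+1) choose (2*m)))"
proof (cases "m \<le> n")
  case False
  then have "n choose m = 0" by simp
  then show ?thesis using l by (simp del: binomial_eq_0_iff)
next
  case True
  define j where "j = n - m"
  have nj: "n = m + j" using True j_def by simp
  define E where "E = real ((2*n) choose (2*m))"
  define Od where "Od = real ((2*n+1) choose (2*m+1))"
  define F where "F = real ((2*n+1) choose (2*m))"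
  define q where "q = 4/(real m+1) + 4/(real j+1)"
  have q0: "q \<ge> 0" unfolding q_def by simp
  have rb: "real (n choose m)^2 \<le> E * sqrt q"
    using rho_bound[of m j] n unfolding E_def q_def nj by simp
  have amgm: "sqrt q \<le> l/2 + q/(2*l)"
  proof -
    have "0 \<le> (sqrt q - l)^2" by simp
    then have "2*l*sqrt q \<le> q + l^2" using q0 by (simp add: power2_eq_square algebra_simps)
    then have "sqrt q \<le> (q + l^2)/(2*l)" using l by (simp add: field_simps)
    also have "\<dots> = l/2 + q/(2*l)" using l by (simp add: field_simps power2_eq_square)
    finally show ?thesis .
  qed
  have E0: "E \<ge> 0" unfolding E_def by simp
  have iO: "(2*real m+1) * Od = (2*real n+1) * E"
  proof -
    have "Suc (2*m) * (Suc (2*n) choose Suc (2*m)) = Suc (2*n) * ((2*n) choose (2*m))"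
      by (rule Suc_times_binomial)
    then have "real (Suc (2*m) * (Suc (2*n) choose Suc (2*m))) = real (Suc (2*n) * ((2*n) choose (2*m)))"
      by (simp only:)
    then show ?thesis unfolding Od_def E_def by (simp only: of_nat_mult of_nat_Suc Suc_eq_plus1) (simp add: algebra_simps)
  qed
  have iF: "(2*real j+1) * F = (2*real n+1) * E"
  proof -
    have "(Suc (2*n) - 2*m) * (Suc (2*n) choose (2*m)) = Suc (2*n) * ((Suc (2*n) - 1) choose (2*m))"
      by (rule binomial_absorb_comp)
    moreover have "Suc (2*n) - 2*m = Suc (2*j)" using nj by simp
    ultimately have "real (Suc (2*j) * (Suc (2*n) choose (2*m))) = real (Suc (2*n) * ((2*n) choose (2*m)))"
      by simp
    then show ?thesis unfolding F_def E_def by (simp only: of_nat_mult of_nat_Suc Suc_eq_plus1) (simp add: algebra_simps)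
  qed
  have n1: "(0::real) < 2*real n+1" by simp
  have hO: "E/(real m+1) \<le> 2*Od/(2*real n+1)"
  proof -
    have "E*(2*real n+1) = (2*real m+1)*Od" using iO by simp
    also have "\<dots> \<le> 2*Od*(real m+1)" unfolding Od_def by (simp add: algebra_simps)
    finally show ?thesis using n1 by (simp add: field_simps)
  qed
  have hF: "E/(real j+1) \<le> 2*F/(2*real n+1)"
  proof -
    have "E*(2*real n+1) = (2*real j+1)*F" using iF by simp
    also have "\<dots> \<le> 2*F*(real j+1)" unfolding F_def by (simp add: algebra_simps)
    finally show ?thesis using n1 by (simp add: field_simps)
  qed
  have "real (n choose m)^2 \<le> E * (l/2 + q/(2*l))"
    using rb amgm E0 by (meson mult_left_mono order_trans)
  also have "\<dots> = (l/2)*E + (2/l)*(E/(real m+1) + E/(real j+1))"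
  proof -
    define s where "s = 1/(real m+1) + 1/(real j+1)"
    have qs: "q = 4*s" unfolding q_def s_def by simp
    have "q/(2*l) = (2/l)*s" unfolding qs using l by simp
    moreover have "E*s = E/(real m+1) + E/(real j+1)" unfolding s_def by (simp add: distrib_left)
    ultimately have "E*(q/(2*l)) = (2/l)*(E/(real m+1) + E/(real j+1))"
      by (metis mult.assoc mult.commute)
    moreover have "E * (l/2 + q/(2*l)) = (l/2)*E + E*(q/(2*l))" by (simp only: distrib_left mult.commute)
    ultimately show ?thesis by simp
  qed
  also have "\<dots> \<le> (l/2)*E + (2/l)*(2*Od/(2*real n+1) + 2*F/(2*real n+1))"
    using hO hF l by (intro add_left_mono mult_left_mono add_mono) auto
  also have "\<dots> = (l/2)*E + (4/(l*(2*real n+1)))*(Od+F)"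
  proof -
    define d where "d = 2*real n+1"
    have "d > 0" using n1 d_def by simp
    then have "(2/l)*(2*Od/d + 2*F/d) = (4/(l*d))*(Od+F)" using l by (simp add: field_simps)
    then show ?thesis unfolding d_def by simp
  qed
  finally show ?thesis unfolding E_def Od_def F_def .
qed


lemma sub_vdm:
  assumes "finite S" "inj_on g S" "\<And>m. m \<in> S \<Longrightarrow> g m \<le> K" "\<And>m. m \<in> S \<Longrightarrow> h m = K - g m"
  shows "(\<Sum>m\<in>S. real (a choose g m) * real (R choose h m)) \<le> real ((a+R) choose K)"
proof -
  have "(\<Sum>m\<in>S. real (a choose g m) * real (R choose h m)) =
        (\<Sum>m\<in>S. ((\<lambda>s. real (a choose s) * real (R choose (K - s))) \<circ> g) m)"
    using assms(4) by (intro sum.cong) auto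
  also have "\<dots> = (\<Sum>s\<in>g`S. real (a choose s) * real (R choose (K - s)))"
    by (rule sum.reindex[OF assms(2), symmetric])
  also have "\<dots> \<le> (\<Sum>s\<le>K. real (a choose s) * real (R choose (K - s)))"
    using assms(3) by (intro sum_mono2) auto
  also have "\<dots> = real ((a+R) choose K)"
    by (simp flip: vandermonde)
  finally show ?thesis .
qed

theorem lemma4:
  shows "\<exists>C::real. \<forall>(N::nat) (k::nat) (c::real).
     0 < k \<and> 6 \<le> k \<and> 2 * k < N \<and>
     real N / c \<in> \<nat> \<and> real N / c > 0 \<and>
     2 \<le> c \<and> c \<le> real k / 3 \<longrightarrow>
     gamma N k c / real (N choose k) \<le> C * sqrt (c / real k)"
proof (rule exI[of _ 5], intro allI impI)
  fix N k :: nat and c :: real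
  assume H: "0 < k \<and> 6 \<le> k \<and> 2 * k < N \<and>
     real N / c \<in> \<nat> \<and> real N / c > 0 \<and> 2 \<le> c \<and> c \<le> real k / 3"
  then have k0: "0 < k" and kN: "2*k < N" and c2: "2 \<le> c" and pos: "real N / c > 0"
    and nat: "real N / c \<in> \<nat>" by auto
  obtain n where n: "real N / c = real n" using nat Nats_cases by metis
  have c0: "c > 0" using c2 by simp
  have n0: "n > 0" using n pos by simp
  have hN: "real N = c * real n" using n c0 by (simp add: field_simps)
  have "real (2*n) \<le> real N" using hN c2 by (simp add: mult_right_mono)
  then have n2N: "2*n \<le> N" by linarith
  define R where "R = N - 2*n"
  have NR: "2*n + R = N" using n2N R_def by simp
  define l where "l = sqrt (c / real k)"
  have l0: "l > 0" using c0 k0 l_def by simp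
  have l2: "l^2 = c / real k" using c0 k0 l_def by simp
  define p where "p = 4/(l*(2*real n+1))"
  define S where "S = {0..k div 2}"
  define r where "r = (\<lambda>m. real (R choose (k - 2*m)))"
  have g: "gamma N k c = (\<Sum>m\<in>S. real (n choose m)^2 * r m)"
    unfolding gamma_def Let_def S_def r_def R_def n by simp
  also have "\<dots> \<le> (\<Sum>m\<in>S. (l/2)*(real ((2*n) choose (2*m)) * r m) +
        p*(real ((2*n+1) choose (2*m+1)) * r m + real ((2*n+1) choose (2*m)) * r m))"
  proof (rule sum_mono)
    fix m assume "m \<in> S"
    have "real (n choose m)^2 * r m \<le> ((l/2)*real ((2*n) choose (2*m)) +
     p*(real ((2*n+1) choose (2*m+1)) + real ((2*n+1) choose (2*m)))) * r m"
      unfolding p_def using term_bound0[OF l0 n0, of m] r_def by (intro mult_right_mono) auto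
    then show "real (n choose m)^2 * r m \<le> (l/2)*(real ((2*n) choose (2*m)) * r m) +
        p*(real ((2*n+1) choose (2*m+1)) * r m + real ((2*n+1) choose (2*m)) * r m)"
      by (simp add: algebra_simps)
  qed
  also have "\<dots> = (l/2)*(\<Sum>m\<in>S. real ((2*n) choose (2*m)) * r m) +
        p*((\<Sum>m\<in>S. real ((2*n+1) choose (2*m+1)) * r m) + (\<Sum>m\<in>S. real ((2*n+1) choose (2*m)) * r m))"
    by (simp only: sum.distrib sum_distrib_left distrib_left)
  finally have g1: "gamma N k c \<le> \<dots>" .
  have inj2: "inj_on (\<lambda>m::nat. 2*m) S" by (auto simp: inj_on_def)
  have inj21: "inj_on (\<lambda>m::nat. 2*m+1) S" by (auto simp: inj_on_def)
  have SE: "(\<Sum>m\<in>S. real ((2*n) choose (2*m)) * r m) \<le> real (N choose k)"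
    using sub_vdm[of S "\<lambda>m. 2*m" k "\<lambda>m. k - 2*m" "2*n" R] inj2 NR
    unfolding r_def S_def by auto
  have SO: "(\<Sum>m\<in>S. real ((2*n+1) choose (2*m+1)) * r m) \<le> real ((N+1) choose (k+1))"
    using sub_vdm[of S "\<lambda>m. 2*m+1" "k+1" "\<lambda>m. k - 2*m" "2*n+1" R] inj21 NR
    unfolding r_def S_def by auto
  have SF: "(\<Sum>m\<in>S. real ((2*n+1) choose (2*m)) * r m) \<le> real ((N+1) choose k)"
    using sub_vdm[of S "\<lambda>m. 2*m" k "\<lambda>m. k - 2*m" "2*n+1" R] inj2 NR
    unfolding r_def S_def by auto
  define B where "B = real (N choose k)"
  have B0: "B > 0" unfolding B_def using kN by simp
  have B1: "(real k + 1) * real ((N+1) choose (k+1)) = (real N + 1) * B"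
  proof -
    have "Suc k * (Suc N choose Suc k) = Suc N * (N choose k)" by (rule Suc_times_binomial)
    then have "real (Suc k * (Suc N choose Suc k)) = real (Suc N * (N choose k))" by (simp only:)
    then show ?thesis unfolding B_def by (simp add: algebra_simps)
  qed
  have B2: "(real N + 1 - real k) * real ((N+1) choose k) = (real N + 1) * B"
  proof -
    have e: "(Suc N - k) * (Suc N choose k) = Suc N * (N choose k)"
      using binomial_absorb_comp[of "Suc N" k] by (simp only: diff_Suc_1)
    have "real (Suc N - k) * real (Suc N choose k) = real (Suc N) * real (N choose k)"
      using arg_cong[OF e, of real] by (simp only: of_nat_mult)
    moreover have "real (Suc N - k) = real N + 1 - real k" using kN by simp
    moreover have "real (Suc N) = real N + 1" by simp
    ultimately show ?thesis unfolding B_def by simp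
  qed
  define X where "X = (real N + 1) * B / (real k + 1)"
  have hX1: "real ((N+1) choose (k+1)) \<le> X"
    using B1 unfolding X_def by (simp add: field_simps)
  have hX2: "real ((N+1) choose k) \<le> X"
  proof -
    have kk: "real k + 1 \<le> real N + 1 - real k" using kN by simp
    have "real ((N+1) choose k) * (real k + 1) \<le> real ((N+1) choose k) * (real N + 1 - real k)"
      using kk by (intro mult_left_mono) auto
    also have "\<dots> = (real N + 1) * B" using B2 by (simp add: mult.commute)
    finally show ?thesis unfolding X_def by (simp add: field_simps)
  qed
  have p0: "p \<ge> 0" unfolding p_def using l0 by simp
  have "gamma N k c \<le> (l/2)*B + p*(X + X)"
  proof -
    have "(l/2)*(\<Sum>m\<in>S. real ((2*n) choose (2*m)) * r m) \<le> (l/2)*B"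
      using SE l0 unfolding B_def by (intro mult_left_mono) auto
    moreover have "p*((\<Sum>m\<in>S. real ((2*n+1) choose (2*m+1)) * r m) + (\<Sum>m\<in>S. real ((2*n+1) choose (2*m)) * r m))
       \<le> p*(X+X)"
      using SO SF hX1 hX2 p0 by (intro mult_left_mono add_mono) auto
    ultimately show ?thesis using g1 by linarith
  qed
  also have "\<dots> \<le> 5 * l * B"
  proof -
    have kr: "real k > 0" using k0 by simp
    have Nk: "real k \<le> real N" using kN by simp
    have key: "2*(real N+1)*real k \<le> (2*real N + c)*(real k + 1)"
    proof -
      have "(2*real N + c)*(real k + 1) = 2*(real N+1)*real k + (2*real N - 2*real k) + c*real k + c"
        by (simp add: algebra_simps)
      moreover have "c*real k \<ge> 0" using c0 kr by simp
      ultimately show ?thesis using Nk c0 by linarith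
    qed
    have "2*(real N+1)*real k \<le> c*(2*real n+1)*(real k+1)"
      using key hN by (simp add: algebra_simps)
    then have "8*(real N+1) \<le> 4*(c/real k)*(2*real n+1)*(real k+1)"
      using kr by (simp add: field_simps)
    then have e: "8*(real N+1) \<le> 4*l^2*(2*real n+1)*(real k+1)" unfolding l2 .
    have "p*(X+X) = 8*(real N+1)/(l*(2*real n+1)*(real k+1)) * B"
    proof -
      define d1 where "d1 = 2*real n+1"
      define d2 where "d2 = real k+1"
      have "d1 > 0" "d2 > 0" unfolding d1_def d2_def by auto
      then have "4/(l*d1)*((real N + 1) * B / d2 + (real N + 1) * B / d2) = 8*(real N+1)/(l*d1*d2) * B"
        using l0 by (simp add: field_simps)
      then show ?thesis unfolding p_def X_def d1_def d2_def .
    qed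
    also have "\<dots> \<le> 4*l * B"
    proof (intro mult_right_mono)
      have d0: "l*(2*real n+1)*(real k+1) > 0" using l0 by simp
      have "8*(real N+1) \<le> (4*l) * (l*(2*real n+1)*(real k+1))"
        using e by (simp add: power2_eq_square mult_ac)
      then show "8*(real N+1)/(l*(2*real n+1)*(real k+1)) \<le> 4*l"
        using d0 by (simp add: divide_le_eq)
    qed (use B0 in simp)
    finally have h: "p*(X+X) \<le> 4*l*B" .
    have "(l/2)*B = (1/2)*(l*B)" "5*l*B = 5*(l*B)" "4*l*B = 4*(l*B)" by simp_all
    moreover have "l*B > 0" using l0 B0 by simp
    ultimately show ?thesis using h by linarith
  qed
  finally have "gamma N k c \<le> 5 * l * B" .
  then show "gamma N k c / real (N choose k) \<le> 5 * sqrt (c / real k)"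
    using B0 unfolding B_def l_def by (simp add: divide_le_eq mult_ac)
qed
end
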